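(* Let $P$ and $Q$ be finite posets with $\mathbb{E}(\mathrm{uni}_P;\mathrm{ddeg})=\mathbb{E}(\mathrm{uni}_Q;\mathrm{ddeg})$. If $P$ and $Q$ are both CDE then the disjoint union $P+Q$ is CDE. If $P$ and $Q$ are both mCDE then $P+Q$ is mCDE.
   Context: All posets are finite. $\mathbb{E}(\mu;f)=\sum_p f(p)\mathbb{P}(\mu;p)$. $\mathrm{ddeg}(p)$ is the number of elements covered by $p$; $\mathrm{uni}_P$ is the uniform distribution on $P$. $\mathrm{maxchain}_P$ is the distribution on $P$ giving each $p$ probability proportional to the number of maximal chains of $P$ containing $p$. $P$ is CDE if $\mathbb{E}(\mathrm{maxchain}_P;\mathrm{ddeg})=\mathbb{E}(\mathrm{uni}_P;\mathrm{ddeg})$. A $k$-chain is $c_0<\cdots<c_k$; $\mathrm{chain}(k)_P$ gives $p$ probability $\#\{k\text{-chains }c\ni p\}/((k+1)\#\{k\text{-chains}\})$. If $r$ is the length of a longest chain in $P$, $P$ is mCDE if $\mathbb{E}(\mathrm{chain}(k)_P;\mathrm{ddeg})=\mathbb{E}(\mathrm{uni}_P;\mathrm{ddeg})$ for all $k=0,\ldots,r$. $P+Q$ is the disjoint union, with $x\le y$ iff both lie in $P$ and $x\le_P y$ or both lie in $Q$ and $x\le_Q y$. *)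

theory Defs
  imports Complex_Main
begin

definition finite_poset :: "'a set \<Rightarrow> 'a rel \<Rightarrow> bool" where
  "finite_poset P R \<longleftrightarrow> finite P \<and> R \<subseteq> P \<times> P \<and> partial_order_on P R"

definition pless :: "'a rel \<Rightarrow> 'a \<Rightarrow> 'a \<Rightarrow> bool" where
  "pless R x y \<longleftrightarrow> (x, y) \<in> R \<and> x \<noteq> y"

definition covered_by :: "'a set \<Rightarrow> 'a rel \<Rightarrow> 'a \<Rightarrow> 'a \<Rightarrow> bool" where
  "covered_by P R q p \<longleftrightarrow> q \<in> P \<and> p \<in> P \<and> pless R q p \<and>
     \<not> (\<exists>z\<in>P. pless R q z \<and> pless R z p)"

definition ddeg :: "'a set \<Rightarrow> 'a rel \<Rightarrow> 'a \<Rightarrow> nat" where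
  "ddeg P R p = card {q \<in> P. covered_by P R q p}"

definition E_uni_ddeg :: "'a set \<Rightarrow> 'a rel \<Rightarrow> real" where
  "E_uni_ddeg P R = (\<Sum>p\<in>P. real (ddeg P R p) * (1 / real (card P)))"

definition is_chain :: "'a set \<Rightarrow> 'a rel \<Rightarrow> 'a set \<Rightarrow> bool" where
  "is_chain P R C \<longleftrightarrow> C \<subseteq> P \<and> (\<forall>x\<in>C. \<forall>y\<in>C. (x, y) \<in> R \<or> (y, x) \<in> R)"

definition maximal_chains :: "'a set \<Rightarrow> 'a rel \<Rightarrow> 'a set set" where
  "maximal_chains P R = {C. is_chain P R C \<and> \<not> (\<exists>D. is_chain P R D \<and> C \<subset> D)}"

definition maxchain_prob :: "'a set \<Rightarrow> 'a rel \<Rightarrow> 'a \<Rightarrow> real" where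
  "maxchain_prob P R p =
     real (card {C \<in> maximal_chains P R. p \<in> C}) /
     (\<Sum>q\<in>P. real (card {C \<in> maximal_chains P R. q \<in> C}))"

definition E_maxchain_ddeg :: "'a set \<Rightarrow> 'a rel \<Rightarrow> real" where
  "E_maxchain_ddeg P R = (\<Sum>p\<in>P. real (ddeg P R p) * maxchain_prob P R p)"

definition CDE :: "'a set \<Rightarrow> 'a rel \<Rightarrow> bool" where
  "CDE P R \<longleftrightarrow> E_maxchain_ddeg P R = E_uni_ddeg P R"

definition k_chains :: "'a set \<Rightarrow> 'a rel \<Rightarrow> nat \<Rightarrow> 'a list set" where
  "k_chains P R k = {cs. length cs = k + 1 \<and> set cs \<subseteq> P \<and> sorted_wrt (pless R) cs}"

definition chain_prob :: "'a set \<Rightarrow> 'a rel \<Rightarrow> nat \<Rightarrow> 'a \<Rightarrow> real" where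
  "chain_prob P R k p =
     real (card {cs \<in> k_chains P R k. p \<in> set cs}) /
     (real (k + 1) * real (card (k_chains P R k)))"

definition E_chain_ddeg :: "'a set \<Rightarrow> 'a rel \<Rightarrow> nat \<Rightarrow> real" where
  "E_chain_ddeg P R k = (\<Sum>p\<in>P. real (ddeg P R p) * chain_prob P R k p)"

definition poset_height :: "'a set \<Rightarrow> 'a rel \<Rightarrow> nat" where
  "poset_height P R = Max {k. k_chains P R k \<noteq> {}}"

definition mCDE :: "'a set \<Rightarrow> 'a rel \<Rightarrow> bool" where
  "mCDE P R \<longleftrightarrow> (\<forall>k \<le> poset_height P R. E_chain_ddeg P R k = E_uni_ddeg P R)"

definition sum_rel :: "'a rel \<Rightarrow> 'b rel \<Rightarrow> ('a + 'b) rel" where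
  "sum_rel R S = {(Inl x, Inl y) | x y. (x, y) \<in> R} \<union> {(Inr x, Inr y) | x y. (x, y) \<in> S}"

end

theory Submission
  imports Defs
begin

lemma pless_sum[simp]:
  "pless (sum_rel R S) (Inl a) (Inl b) = pless R a b"
  "pless (sum_rel R S) (Inr c) (Inr d) = pless S c d"
  "\<not> pless (sum_rel R S) (Inl a) (Inr d)"
  "\<not> pless (sum_rel R S) (Inr c) (Inl b)"
  by (auto simp: pless_def sum_rel_def)

lemma mem_sum_rel[simp]:
  "((Inl a, Inl b) \<in> sum_rel R S) = ((a,b) \<in> R)"
  "((Inr c, Inr d) \<in> sum_rel R S) = ((c,d) \<in> S)"
  "(Inl a, Inr d) \<notin> sum_rel R S"
  "(Inr c, Inl b) \<notin> sum_rel R S"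
  by (auto simp: sum_rel_def)

lemma ddeg_Inl: "ddeg (P <+> Q) (sum_rel R S) (Inl a) = ddeg P R a"
proof -
  have "{q \<in> P <+> Q. covered_by (P <+> Q) (sum_rel R S) q (Inl a)} = Inl ` {b\<in>P. covered_by P R b a}"
    by (auto simp: covered_by_def elim!: PlusE) (force simp: covered_by_def)+
  thus ?thesis unfolding ddeg_def by (simp add: card_image)
qed

lemma ddeg_Inr: "ddeg (P <+> Q) (sum_rel R S) (Inr a) = ddeg Q S a"
proof -
  have "{q \<in> P <+> Q. covered_by (P <+> Q) (sum_rel R S) q (Inr a)} = Inr ` {b\<in>Q. covered_by Q S b a}"
    by (auto simp: covered_by_def elim!: PlusE) (force simp: covered_by_def)+
  thus ?thesis unfolding ddeg_def by (simp add: card_image)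
qed

lemma E_uni_alt: "E_uni_ddeg P R = (\<Sum>p\<in>P. real (ddeg P R p)) / card P"
  unfolding E_uni_ddeg_def by (simp add: sum_divide_distrib)

lemma sum_ddeg: "finite P \<Longrightarrow> (\<Sum>p\<in>P. real (ddeg P R p)) = E_uni_ddeg P R * card P"
  unfolding E_uni_alt by (cases "card P = 0") auto

lemma E_uni_sum:
  assumes "finite P" "finite Q" "E_uni_ddeg P R = e" "E_uni_ddeg Q S = e"
  shows "E_uni_ddeg (P <+> Q) (sum_rel R S) = e"
proof -
  have "E_uni_ddeg (P <+> Q) (sum_rel R S) = (\<Sum>p\<in>P <+> Q. real (ddeg (P <+> Q) (sum_rel R S) p)) / card (P <+> Q)"
    by (rule E_uni_alt)
  also have "\<dots> = (e * card P + e * card Q) / (card P + card Q)"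
    using assms sum_ddeg[of P R] sum_ddeg[of Q S]
    by (simp add: sum.Plus o_def ddeg_Inl ddeg_Inr card_Plus del: sum_ddeg)
  also have "\<dots> = e"
  proof (cases "card P + card Q = 0")
    case True
    then have "P = {}" using assms by simp
    then have "e = 0" using assms(3) by (simp add: E_uni_ddeg_def)
    then show ?thesis by simp
  next
    case False
    then have "real (card P) + real (card Q) \<noteq> 0" by linarith
    then show ?thesis by (simp add: distrib_left[symmetric])
  qed
  finally show ?thesis .
qed

lemma chain_Inl:
  assumes "is_chain (P <+> Q) (sum_rel R S) D" "Inl a \<in> D"
  shows "D = Inl ` (Inl -` D) \<and> is_chain P R (Inl -` D)"
proof -
  have "\<forall>x\<in>D. \<exists>b. x = Inl b"
  proof
    fix x assume "x \<in> D"
    with assms have "(x, Inl a) \<in> sum_rel R S \<or> (Inl a, x) \<in> sum_rel R S"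
      unfolding is_chain_def by blast
    then show "\<exists>b. x = Inl b" by (cases x) auto
  qed
  then have "D = Inl ` (Inl -` D)" by force
  moreover have "is_chain P R (Inl -` D)"
    using assms(1) unfolding is_chain_def by force
  ultimately show ?thesis by blast
qed

lemma chain_Inr:
  assumes "is_chain (P <+> Q) (sum_rel R S) D" "Inr a \<in> D"
  shows "D = Inr ` (Inr -` D) \<and> is_chain Q S (Inr -` D)"
proof -
  have "\<forall>x\<in>D. \<exists>b. x = Inr b"
  proof
    fix x assume "x \<in> D"
    with assms have "(x, Inr a) \<in> sum_rel R S \<or> (Inr a, x) \<in> sum_rel R S"
      unfolding is_chain_def by blast
    then show "\<exists>b. x = Inr b" by (cases x) auto
  qed
  then have "D = Inr ` (Inr -` D)" by force
  moreover have "is_chain Q S (Inr -` D)"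
    using assms(1) unfolding is_chain_def by force
  ultimately show ?thesis by blast
qed

lemma chain_Inl_img: "is_chain P R C \<Longrightarrow> is_chain (P <+> Q) (sum_rel R S) (Inl ` C)"
  unfolding is_chain_def by auto

lemma chain_Inr_img: "is_chain Q S C \<Longrightarrow> is_chain (P <+> Q) (sum_rel R S) (Inr ` C)"
  unfolding is_chain_def by auto

lemma cm_Inl:
  "card {C \<in> maximal_chains (P <+> Q) (sum_rel R S). Inl a \<in> C} = card {C \<in> maximal_chains P R. a \<in> C}"
proof -
  have seq: "{C \<in> maximal_chains (P <+> Q) (sum_rel R S). Inl a \<in> C} = (\<lambda>C. Inl ` C) ` {C \<in> maximal_chains P R. a \<in> C}"
  proof (rule set_eqI, rule iffI)
    fix D assume D: "D \<in> {C \<in> maximal_chains (P <+> Q) (sum_rel R S). Inl a \<in> C}"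
    then have ch: "is_chain (P <+> Q) (sum_rel R S) D" and a: "Inl a \<in> D"
      and mx: "\<And>E. is_chain (P <+> Q) (sum_rel R S) E \<Longrightarrow> \<not> D \<subset> E"
      by (auto simp: maximal_chains_def)
    from chain_Inl[OF ch a] have eq: "D = Inl ` (Inl -` D)" and c': "is_chain P R (Inl -` D)" by auto
    have "Inl -` D \<in> maximal_chains P R"
      unfolding maximal_chains_def
    proof (intro CollectI conjI c' notI)
      assume "\<exists>E. is_chain P R E \<and> Inl -` D \<subset> E"
      then obtain E where "is_chain P R E" "Inl -` D \<subset> E" by blast
      then have 1: "is_chain (P <+> Q) (sum_rel R S) (Inl ` E)" 
        using chain_Inl_img by blast
      have "Inl ` (Inl -` D) \<subset> Inl ` E"
        using \<open>Inl -` D \<subset> E\<close> by (simp add: inj_image_subset_iff psubset_eq inj_image_eq_iff)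
      then have "D \<subset> Inl ` E" using eq by metis
      with mx 1 show False by blast
    qed
    moreover have "a \<in> Inl -` D" using a by simp
    ultimately have "Inl -` D \<in> {C \<in> maximal_chains P R. a \<in> C}" by blast
    then show "D \<in> (\<lambda>C. Inl ` C) ` {C \<in> maximal_chains P R. a \<in> C}" using eq by blast
  next
    fix D :: "('a + 'b) set" assume "D \<in> (\<lambda>C. Inl ` C) ` {C \<in> maximal_chains P R. a \<in> C}"
    then obtain C where D: "D = Inl ` C" and C: "C \<in> maximal_chains P R" "a \<in> C" by auto
    from C have ch: "is_chain P R C" and mx: "\<And>E. is_chain P R E \<Longrightarrow> \<not> C \<subset> E"
      by (auto simp: maximal_chains_def)
    have "D \<in> maximal_chains (P <+> Q) (sum_rel R S)"
      unfolding maximal_chains_def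
    proof (intro CollectI conjI notI)
      show "is_chain (P <+> Q) (sum_rel R S) D" using D ch chain_Inl_img by blast
    next
      assume "\<exists>E. is_chain (P <+> Q) (sum_rel R S) E \<and> D \<subset> E"
      then obtain E where E: "is_chain (P <+> Q) (sum_rel R S) E" "D \<subset> E" by blast
      with D C have "Inl a \<in> E" by auto
      from chain_Inl[OF E(1) this] have Eeq: "E = Inl ` (Inl -` E)" and Ec: "is_chain P R (Inl -` E)" by auto
      have "C \<subseteq> Inl -` E" using E(2) D by auto
      moreover have "C \<noteq> Inl -` E"
      proof
        assume "C = Inl -` E"
        then have "D = E" using D Eeq by metis
        with E(2) show False by simp
      qed
      ultimately show False using mx Ec by blast
    qed
    with D C show "D \<in> {C \<in> maximal_chains (P <+> Q) (sum_rel R S). Inl a \<in> C}" by auto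
  qed
  have inj: "inj_on (\<lambda>C. Inl ` C) {C \<in> maximal_chains P R. a \<in> C}"
    by (rule inj_onI) (simp add: inj_image_eq_iff)
  show ?thesis unfolding seq using card_image[OF inj] .
qed


lemma cm_Inr:
  "card {C \<in> maximal_chains (P <+> Q) (sum_rel R S). Inr a \<in> C} = card {C \<in> maximal_chains Q S. a \<in> C}"
proof -
  have seq: "{C \<in> maximal_chains (P <+> Q) (sum_rel R S). Inr a \<in> C} = (\<lambda>C. Inr ` C) ` {C \<in> maximal_chains Q S. a \<in> C}"
  proof (rule set_eqI, rule iffI)
    fix D assume D: "D \<in> {C \<in> maximal_chains (P <+> Q) (sum_rel R S). Inr a \<in> C}"
    then have ch: "is_chain (P <+> Q) (sum_rel R S) D" and a: "Inr a \<in> D"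
      and mx: "\<And>E. is_chain (P <+> Q) (sum_rel R S) E \<Longrightarrow> \<not> D \<subset> E"
      by (auto simp: maximal_chains_def)
    from chain_Inr[OF ch a] have eq: "D = Inr ` (Inr -` D)" and c': "is_chain Q S (Inr -` D)" by auto
    have "Inr -` D \<in> maximal_chains Q S"
      unfolding maximal_chains_def
    proof (intro CollectI conjI c' notI)
      assume "\<exists>E. is_chain Q S E \<and> Inr -` D \<subset> E"
      then obtain E where "is_chain Q S E" "Inr -` D \<subset> E" by blast
      then have 1: "is_chain (P <+> Q) (sum_rel R S) (Inr ` E)" 
        using chain_Inr_img by blast
      have "Inr ` (Inr -` D) \<subset> Inr ` E"
        using \<open>Inr -` D \<subset> E\<close> by (simp add: inj_image_subset_iff psubset_eq inj_image_eq_iff)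
      then have "D \<subset> Inr ` E" using eq by metis
      with mx 1 show False by blast
    qed
    moreover have "a \<in> Inr -` D" using a by simp
    ultimately have "Inr -` D \<in> {C \<in> maximal_chains Q S. a \<in> C}" by blast
    then show "D \<in> (\<lambda>C. Inr ` C) ` {C \<in> maximal_chains Q S. a \<in> C}" using eq by blast
  next
    fix D :: "('a + 'b) set" assume "D \<in> (\<lambda>C. Inr ` C) ` {C \<in> maximal_chains Q S. a \<in> C}"
    then obtain C where D: "D = Inr ` C" and C: "C \<in> maximal_chains Q S" "a \<in> C" by auto
    from C have ch: "is_chain Q S C" and mx: "\<And>E. is_chain Q S E \<Longrightarrow> \<not> C \<subset> E"
      by (auto simp: maximal_chains_def)
    have "D \<in> maximal_chains (P <+> Q) (sum_rel R S)"
      unfolding maximal_chains_def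
    proof (intro CollectI conjI notI)
      show "is_chain (P <+> Q) (sum_rel R S) D" using D ch chain_Inr_img by blast
    next
      assume "\<exists>E. is_chain (P <+> Q) (sum_rel R S) E \<and> D \<subset> E"
      then obtain E where E: "is_chain (P <+> Q) (sum_rel R S) E" "D \<subset> E" by blast
      with D C have "Inr a \<in> E" by auto
      from chain_Inr[OF E(1) this] have Eeq: "E = Inr ` (Inr -` E)" and Ec: "is_chain Q S (Inr -` E)" by auto
      have "C \<subseteq> Inr -` E" using E(2) D by auto
      moreover have "C \<noteq> Inr -` E"
      proof
        assume "C = Inr -` E"
        then have "D = E" using D Eeq by metis
        with E(2) show False by simp
      qed
      ultimately show False using mx Ec by blast
    qed
    with D C show "D \<in> {C \<in> maximal_chains (P <+> Q) (sum_rel R S). Inr a \<in> C}" by auto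
  qed
  have inj: "inj_on (\<lambda>C. Inr ` C) {C \<in> maximal_chains Q S. a \<in> C}"
    by (rule inj_onI) (simp add: inj_image_eq_iff)
  show ?thesis unfolding seq using card_image[OF inj] .
qed


lemma sorted_wrt_pair: "sorted_wrt r xs \<Longrightarrow> x \<in> set xs \<Longrightarrow> y \<in> set xs \<Longrightarrow> x = y \<or> r x y \<or> r y x"
  by (induction xs) auto

lemma Inl_Plus[simp]: "(Inl a \<in> P <+> Q) = (a \<in> P)" and Inr_Plus[simp]: "(Inr b \<in> P <+> Q) = (b \<in> Q)"
  by auto

lemma kc_Inl:
  "{cs \<in> k_chains (P <+> Q) (sum_rel R S) k. Inl a \<in> set cs} = map Inl ` {cs \<in> k_chains P R k. a \<in> set cs}"
proof (rule set_eqI, rule iffI)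
  fix cs assume cs: "cs \<in> {cs \<in> k_chains (P <+> Q) (sum_rel R S) k. Inl a \<in> set cs}"
  then have len: "length cs = k + 1" and sub: "set cs \<subseteq> P <+> Q" and srt: "sorted_wrt (pless (sum_rel R S)) cs"
    and a: "Inl a \<in> set cs" by (auto simp: k_chains_def)
  have allL: "\<forall>x\<in>set cs. \<exists>b. x = Inl b"
  proof
    fix x assume "x \<in> set cs"
    from sorted_wrt_pair[OF srt this a] show "\<exists>b. x = Inl b" by (cases x) auto
  qed
  define ds where "ds = map projl cs"
  have eq: "cs = map Inl ds" unfolding ds_def map_map
    by (rule sym, rule map_idI) (use allL in auto)
  have "ds \<in> {cs \<in> k_chains P R k. a \<in> set cs}"
    using len sub srt a unfolding eq k_chains_def by (auto simp: sorted_wrt_map)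
  then show "cs \<in> map Inl ` {cs \<in> k_chains P R k. a \<in> set cs}" using eq by blast
next
  fix cs :: "('a + 'b) list" assume "cs \<in> map Inl ` {cs \<in> k_chains P R k. a \<in> set cs}"
  then obtain ds where "cs = map Inl ds" "ds \<in> {cs \<in> k_chains P R k. a \<in> set cs}" by blast
  then show "cs \<in> {cs \<in> k_chains (P <+> Q) (sum_rel R S) k. Inl a \<in> set cs}"
    by (auto simp: k_chains_def sorted_wrt_map)
qed

lemma kc_Inr:
  "{cs \<in> k_chains (P <+> Q) (sum_rel R S) k. Inr a \<in> set cs} = map Inr ` {cs \<in> k_chains Q S k. a \<in> set cs}"
proof (rule set_eqI, rule iffI)
  fix cs assume cs: "cs \<in> {cs \<in> k_chains (P <+> Q) (sum_rel R S) k. Inr a \<in> set cs}"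
  then have len: "length cs = k + 1" and sub: "set cs \<subseteq> P <+> Q" and srt: "sorted_wrt (pless (sum_rel R S)) cs"
    and a: "Inr a \<in> set cs" by (auto simp: k_chains_def)
  have allL: "\<forall>x\<in>set cs. \<exists>b. x = Inr b"
  proof
    fix x assume "x \<in> set cs"
    from sorted_wrt_pair[OF srt this a] show "\<exists>b. x = Inr b" by (cases x) auto
  qed
  define ds where "ds = map projr cs"
  have eq: "cs = map Inr ds" unfolding ds_def map_map
    by (rule sym, rule map_idI) (use allL in auto)
  have "ds \<in> {cs \<in> k_chains Q S k. a \<in> set cs}"
    using len sub srt a unfolding eq k_chains_def by (auto simp: sorted_wrt_map)
  then show "cs \<in> map Inr ` {cs \<in> k_chains Q S k. a \<in> set cs}" using eq by blast
next
  fix cs :: "('a + 'b) list" assume "cs \<in> map Inr ` {cs \<in> k_chains Q S k. a \<in> set cs}"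
  then obtain ds where "cs = map Inr ds" "ds \<in> {cs \<in> k_chains Q S k. a \<in> set cs}" by blast
  then show "cs \<in> {cs \<in> k_chains (P <+> Q) (sum_rel R S) k. Inr a \<in> set cs}"
    by (auto simp: k_chains_def sorted_wrt_map)
qed

lemma ck_Inl: "card {cs \<in> k_chains (P <+> Q) (sum_rel R S) k. Inl a \<in> set cs} = card {cs \<in> k_chains P R k. a \<in> set cs}"
  unfolding kc_Inl by (rule card_image) (simp add: inj_on_def)

lemma ck_Inr: "card {cs \<in> k_chains (P <+> Q) (sum_rel R S) k. Inr a \<in> set cs} = card {cs \<in> k_chains Q S k. a \<in> set cs}"
  unfolding kc_Inr by (rule card_image) (simp add: inj_on_def)

lemma finite_kc: "finite P \<Longrightarrow> finite (k_chains P R k)"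
  by (rule finite_subset[OF _ finite_lists_length_eq[of P "k+1"]]) (auto simp: k_chains_def)

lemma kc_sum: "k_chains (P <+> Q) (sum_rel R S) k = map Inl ` k_chains P R k \<union> map Inr ` k_chains Q S k"
proof (rule set_eqI, rule iffI)
  fix cs assume cs: "cs \<in> k_chains (P <+> Q) (sum_rel R S) k"
  then have "cs \<noteq> []" "set cs \<subseteq> P <+> Q" by (auto simp: k_chains_def)
  then have h: "hd cs \<in> set cs" "hd cs \<in> P <+> Q" by auto
  show "cs \<in> map Inl ` k_chains P R k \<union> map Inr ` k_chains Q S k"
  proof (cases "hd cs")
    case (Inl a)
    then have "cs \<in> {cs \<in> k_chains (P <+> Q) (sum_rel R S) k. Inl a \<in> set cs}" using cs h by auto
    then show ?thesis unfolding kc_Inl by blast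
  next
    case (Inr a)
    then have "cs \<in> {cs \<in> k_chains (P <+> Q) (sum_rel R S) k. Inr a \<in> set cs}" using cs h by auto
    then show ?thesis unfolding kc_Inr by blast
  qed
next
  fix cs assume "cs \<in> map Inl ` k_chains P R k \<union> map Inr ` k_chains Q S k"
  then show "cs \<in> k_chains (P <+> Q) (sum_rel R S) k"
    by (auto simp: k_chains_def sorted_wrt_map)
qed

lemma map_Inl_Inr: "xa \<noteq> [] \<Longrightarrow> map Inl xa \<noteq> map Inr xb"
  by (cases xa; cases xb) auto

lemma card_kc_sum:
  assumes "finite P" "finite Q"
  shows "card (k_chains (P <+> Q) (sum_rel R S) k) = card (k_chains P R k) + card (k_chains Q S k)"
proof -
  have "card (map Inl ` k_chains P R k \<union> map Inr ` k_chains Q S k) = card (map Inl ` k_chains P R k :: ('a + 'b) list set) + card (map Inr ` k_chains Q S k :: ('a + 'b) list set)"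
  proof (intro card_Un_disjoint)
    show "finite (map Inl ` k_chains P R k :: ('a + 'b) list set)" using finite_kc[OF assms(1)] by blast
    show "finite (map Inr ` k_chains Q S k :: ('a + 'b) list set)" using finite_kc[OF assms(2)] by blast
    show "(map Inl ` k_chains P R k :: ('a + 'b) list set) \<inter> map Inr ` k_chains Q S k = {}"
    proof (rule equals0I)
      fix x assume "x \<in> (map Inl ` k_chains P R k :: ('a + 'b) list set) \<inter> map Inr ` k_chains Q S k"
      then obtain xa xb where "x = map Inl xa" "x = map Inr xb" "length xa = k + 1"
        unfolding k_chains_def by blast
      then have "xa \<noteq> []" by auto
      then have "map Inl xa \<noteq> map Inr xb" by (rule map_Inl_Inr)
      with \<open>x = map Inl xa\<close> \<open>x = map Inr xb\<close> show False by simp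
    qed
  qed
  also have "\<dots> = card (k_chains P R k) + card (k_chains Q S k)"
    by (simp add: card_image inj_on_def)
  finally show ?thesis unfolding kc_sum .
qed


lemma sorted_pless_distinct: "sorted_wrt (pless R) xs \<Longrightarrow> distinct xs"
  by (induction xs) (auto simp: pless_def)

lemma kc_len: "finite P \<Longrightarrow> cs \<in> k_chains P R k \<Longrightarrow> k + 1 \<le> card P"
  unfolding k_chains_def
  by (metis (mono_tags, lifting) card_mono distinct_card mem_Collect_eq sorted_pless_distinct)

lemma fin_ht: "finite P \<Longrightarrow> finite {k. k_chains P R k \<noteq> {}}"
  by (rule finite_subset[of _ "{..card P}"]) (auto dest: kc_len)

lemma le_ht: "finite P \<Longrightarrow> k_chains P R k \<noteq> {} \<Longrightarrow> k \<le> poset_height P R"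
  unfolding poset_height_def by (rule Max_ge) (auto intro: fin_ht)

lemma kc_nonempty:
  assumes "finite P" "P \<noteq> {}" "k \<le> poset_height P R"
  shows "k_chains P R k \<noteq> {}"
proof -
  obtain x where "x \<in> P" using assms by blast
  then have "[x] \<in> k_chains P R 0" by (simp add: k_chains_def)
  then have ne: "{k. k_chains P R k \<noteq> {}} \<noteq> {}" by blast
  have "poset_height P R \<in> {k. k_chains P R k \<noteq> {}}"
    unfolding poset_height_def using Max_in[OF fin_ht[OF assms(1)] ne] .
  then obtain cs where cs: "cs \<in> k_chains P R (poset_height P R)" by blast
  have "take (k+1) cs \<in> k_chains P R k"
    using cs assms(3) unfolding k_chains_def
    by (auto simp: min_def dest: in_set_takeD)
  then show ?thesis by blast
qed

lemma E_max_alt: "E_maxchain_ddeg P R =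
  (\<Sum>p\<in>P. real (ddeg P R p) * real (card {C \<in> maximal_chains P R. p \<in> C})) /
  (\<Sum>q\<in>P. real (card {C \<in> maximal_chains P R. q \<in> C}))"
  unfolding E_maxchain_ddeg_def maxchain_prob_def by (simp add: sum_divide_distrib)

lemma E_chain_alt: "E_chain_ddeg P R k =
  (\<Sum>p\<in>P. real (ddeg P R p) * real (card {cs \<in> k_chains P R k. p \<in> set cs})) /
  (real (k + 1) * real (card (k_chains P R k)))"
  unfolding E_chain_ddeg_def chain_prob_def by (simp add: sum_divide_distrib)

lemma key_cde:
  assumes "finite P" "CDE P R"
  shows "(\<Sum>p\<in>P. real (ddeg P R p) * real (card {C \<in> maximal_chains P R. p \<in> C}))
     = E_uni_ddeg P R * (\<Sum>q\<in>P. real (card {C \<in> maximal_chains P R. q \<in> C}))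
   \<and> ((\<Sum>q\<in>P. real (card {C \<in> maximal_chains P R. q \<in> C})) = 0 \<longrightarrow> E_uni_ddeg P R = 0)"
proof -
  define A where "A = (\<Sum>p\<in>P. real (ddeg P R p) * real (card {C \<in> maximal_chains P R. p \<in> C}))"
  define D where "D = (\<Sum>q\<in>P. real (card {C \<in> maximal_chains P R. q \<in> C}))"
  have e: "E_uni_ddeg P R = A / D" using assms(2) unfolding CDE_def E_max_alt A_def D_def by simp
  show ?thesis
  proof (cases "D = 0")
    case True
    then have "\<forall>q\<in>P. real (card {C \<in> maximal_chains P R. q \<in> C}) = 0"
      unfolding D_def using assms(1) by (subst sum_nonneg_eq_0_iff[symmetric]) auto
    then have "A = 0" unfolding A_def by simp
    then show ?thesis using True e unfolding A_def D_def by simp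
  next
    case False
    then show ?thesis using e unfolding A_def[symmetric] D_def[symmetric] by simp
  qed
qed

lemma key_mcde:
  assumes "finite P" "mCDE P R"
  shows "(\<Sum>p\<in>P. real (ddeg P R p) * real (card {cs \<in> k_chains P R k. p \<in> set cs}))
     = E_uni_ddeg P R * (real (k + 1) * real (card (k_chains P R k)))"
proof (cases "k_chains P R k = {}")
  case True
  then show ?thesis by simp
next
  case False
  then have "k \<le> poset_height P R" using le_ht assms(1) by blast
  then have e: "E_chain_ddeg P R k = E_uni_ddeg P R" using assms(2) unfolding mCDE_def by blast
  have "card (k_chains P R k) \<noteq> 0" using False finite_kc[OF assms(1)] by simp
  then have den: "real (k + 1) * real (card (k_chains P R k)) \<noteq> 0" by simp
  define A where "A = (\<Sum>p\<in>P. real (ddeg P R p) * real (card {cs \<in> k_chains P R k. p \<in> set cs}))"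
  define dn where "dn = real (k + 1) * real (card (k_chains P R k))"
  have "A / dn = E_uni_ddeg P R" using e unfolding E_chain_alt A_def dn_def .
  then have "A = E_uni_ddeg P R * dn" using den unfolding dn_def[symmetric] by (simp add: divide_eq_eq)
  then show ?thesis unfolding A_def dn_def .
qed


theorem mainTheorem2:
  fixes P :: "'a set" and R :: "'a rel" and Q :: "'b set" and S :: "'b rel"
  assumes "finite_poset P R" and "finite_poset Q S"
    and "E_uni_ddeg P R = E_uni_ddeg Q S"
  shows "(CDE P R \<and> CDE Q S \<longrightarrow> CDE (P <+> Q) (sum_rel R S))
    \<and> (mCDE P R \<and> mCDE Q S \<longrightarrow> mCDE (P <+> Q) (sum_rel R S))"
proof -
  have fP: "finite P" and fQ: "finite Q" using assms(1,2) by (auto simp: finite_poset_def)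
  define e where "e = E_uni_ddeg P R"
  have eP: "E_uni_ddeg P R = e" and eQ: "E_uni_ddeg Q S = e" using assms(3) e_def by auto
  have eT: "E_uni_ddeg (P <+> Q) (sum_rel R S) = e" using E_uni_sum[OF fP fQ eP eQ] .
  have part1: "CDE (P <+> Q) (sum_rel R S)" if cP: "CDE P R" and cQ: "CDE Q S"
  proof -
    define AP where "AP = (\<Sum>p\<in>P. real (ddeg P R p) * real (card {C \<in> maximal_chains P R. p \<in> C}))"
    define DP where "DP = (\<Sum>q\<in>P. real (card {C \<in> maximal_chains P R. q \<in> C}))"
    define AQ where "AQ = (\<Sum>p\<in>Q. real (ddeg Q S p) * real (card {C \<in> maximal_chains Q S. p \<in> C}))"
    define DQ where "DQ = (\<Sum>q\<in>Q. real (card {C \<in> maximal_chains Q S. q \<in> C}))"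
    have kP: "AP = e * DP" "DP = 0 \<longrightarrow> e = 0" using key_cde[OF fP cP] eP unfolding AP_def DP_def by auto
    have kQ: "AQ = e * DQ" "DQ = 0 \<longrightarrow> e = 0" using key_cde[OF fQ cQ] eQ unfolding AQ_def DQ_def by auto
    have DP0: "DP \<ge> 0" unfolding DP_def by (rule sum_nonneg) simp
    have DQ0: "DQ \<ge> 0" unfolding DQ_def by (rule sum_nonneg) simp
    have "E_maxchain_ddeg (P <+> Q) (sum_rel R S) = (AP + AQ) / (DP + DQ)"
      unfolding E_max_alt AP_def AQ_def DP_def DQ_def
      using fP fQ by (simp add: sum.Plus o_def ddeg_Inl ddeg_Inr cm_Inl cm_Inr)
    also have "\<dots> = e"
    proof (cases "DP + DQ = 0")
      case True
      then have "DP = 0" using DP0 DQ0 by linarith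
      then have "e = 0" using kP by simp
      then show ?thesis using True by simp
    next
      case False
      then show ?thesis using kP kQ by (simp add: distrib_left[symmetric])
    qed
    finally show ?thesis unfolding CDE_def eT .
  qed
  have part2: "mCDE (P <+> Q) (sum_rel R S)" if cP: "mCDE P R" and cQ: "mCDE Q S"
    unfolding mCDE_def
  proof (intro allI impI)
    fix k assume k: "k \<le> poset_height (P <+> Q) (sum_rel R S)"
    show "E_chain_ddeg (P <+> Q) (sum_rel R S) k = E_uni_ddeg (P <+> Q) (sum_rel R S)"
    proof (cases "P <+> Q = {}")
      case True
      show ?thesis unfolding E_chain_ddeg_def E_uni_ddeg_def True by simp
    next
      case False
      have ne: "k_chains (P <+> Q) (sum_rel R S) k \<noteq> {}"
        using kc_nonempty[OF _ False k] fP fQ by simp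
      define cP where "cP = real (card (k_chains P R k))"
      define cQ where "cQ = real (card (k_chains Q S k))"
      have cT: "card (k_chains (P <+> Q) (sum_rel R S) k) = card (k_chains P R k) + card (k_chains Q S k)"
        using card_kc_sum[OF fP fQ] .
      have "card (k_chains (P <+> Q) (sum_rel R S) k) \<noteq> 0"
        using ne finite_kc[of "P <+> Q"] fP fQ by simp
      then have "real (card (k_chains P R k)) + real (card (k_chains Q S k)) \<noteq> 0" using cT by linarith
      then have nz: "real (k+1) * (cP + cQ) \<noteq> 0" unfolding cP_def cQ_def by simp
      have "E_chain_ddeg (P <+> Q) (sum_rel R S) k =
        (e * (real (k + 1) * cP) + e * (real (k + 1) * cQ)) / (real (k + 1) * (cP + cQ))"
        unfolding E_chain_alt cT cP_def cQ_def
        using fP fQ key_mcde[OF fP cP, of k] key_mcde[OF fQ cQ, of k] eP eQ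
        by (simp add: sum.Plus o_def ddeg_Inl ddeg_Inr ck_Inl ck_Inr del: of_nat_Suc)
      also have "\<dots> = e" using nz by (simp add: distrib_left[symmetric] mult.assoc[symmetric])
      finally show ?thesis using eT by simp
    qed
  qed
  show ?thesis using part1 part2 by blast
qed

end
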